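(* Let $n\in\{5,6,7\}$. The spanning subgraph $H$ of $P_n$ whose edges are those given by the prefix-reversals $r_4$ and $r_5$ is a disjoint union of $10$-cycles. Each such cycle consists of permutations of the same parity. Consequently, $P_n$ has an equitable proper $4$-coloring in which every color class has exactly $n!/4$ vertices. This coloring is obtained by properly $2$-coloring the cycles of $H$ consisting of even permutations with two colors, and the cycles consisting of odd permutations with two other colors.
   Context: For $n\geqslant 1$, the Pancake graph $P_n$ is the Cayley graph on the symmetric group $\mathrm{Sym}_n$, with permutations written in one-line notation $\pi=[\pi_1\pi_2\ldots\pi_n]$. Its generating set consists of the prefix-reversals $r_i$, $2\leqslant i\leqslant n$. Multiplying $\pi$ on the right by $r_i$ reverses the first $i$ entries: $\pi r_i=[\pi_i\pi_{i-1}\ldots\pi_1\pi_{i+1}\ldots\pi_n]$. Two vertices $\pi,\sigma$ are adjacent iff $\sigma=\pi r_i$ for some $2\leqslant i\leqslant n$. A proper coloring is equitable if the sizes of any two color classes differ by at most one. *)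

theory Defs
  imports "HOL-Combinatorics.Permutations"
begin

text \<open>Permutations of the n-element set {0..<n}; a permutation sigma corresponds to
the one-line word [sigma 0, sigma 1, ..., sigma (n-1)].\<close>
definition sym_vertices :: "nat \<Rightarrow> (nat \<Rightarrow> nat) set" where
  "sym_vertices n = {\<sigma>. \<sigma> permutes {0..<n}}"

text \<open>The prefix-reversal r_i as a permutation of positions (0-indexed).
Right multiplication sigma o r_i reverses the first i entries of the one-line word.\<close>
definition prefix_rev :: "nat \<Rightarrow> nat \<Rightarrow> nat" where
  "prefix_rev i = (\<lambda>j. if j < i then i - 1 - j else j)"

definition rev_adj :: "nat set \<Rightarrow> (nat \<Rightarrow> nat) \<Rightarrow> (nat \<Rightarrow> nat) \<Rightarrow> bool" where
  "rev_adj S \<sigma> \<tau> = (\<exists>i\<in>S. \<tau> = \<sigma> \<circ> prefix_rev i)"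

definition pancake_adj :: "nat \<Rightarrow> (nat \<Rightarrow> nat) \<Rightarrow> (nat \<Rightarrow> nat) \<Rightarrow> bool" where
  "pancake_adj n = rev_adj {2..n}"

text \<open>C is (the vertex set of) a connected component of the graph (V,E) that is a
cycle of length k: C is traversed by a list of k distinct vertices, and the edges
of (V,E) incident to vertices of C are exactly the cycle edges.\<close>
definition cycle_component ::
  "'a set \<Rightarrow> ('a \<Rightarrow> 'a \<Rightarrow> bool) \<Rightarrow> nat \<Rightarrow> 'a set \<Rightarrow> bool" where
  "cycle_component V E k C =
     (\<exists>xs. distinct xs \<and> set xs = C \<and> length xs = k \<and> C \<subseteq> V \<and>
        (\<forall>u\<in>C. \<forall>w\<in>V. E u w \<longleftrightarrow>
           (\<exists>j<k. (u = xs ! j \<and> w = xs ! ((j + 1) mod k)) \<or>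
                  (w = xs ! j \<and> u = xs ! ((j + 1) mod k)))))"

definition proper_coloring ::
  "'a set \<Rightarrow> ('a \<Rightarrow> 'a \<Rightarrow> bool) \<Rightarrow> nat \<Rightarrow> ('a \<Rightarrow> nat) \<Rightarrow> bool" where
  "proper_coloring V E k c =
     ((\<forall>v\<in>V. c v < k) \<and> (\<forall>u\<in>V. \<forall>v\<in>V. E u v \<longrightarrow> c u \<noteq> c v))"

definition equitable :: "'a set \<Rightarrow> nat \<Rightarrow> ('a \<Rightarrow> nat) \<Rightarrow> bool" where
  "equitable V k c =
     (\<forall>a<k. \<forall>b<k. card {v\<in>V. c v = a} \<le> card {v\<in>V. c v = b} + 1)"

end

theory Submission
  imports Defs
begin

lemma prefix_rev_invol[simp]: "prefix_rev i (prefix_rev i x) = x"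
  by (simp add: prefix_rev_def)

lemma prefix_rev_o: "prefix_rev i \<circ> prefix_rev i = id"
  by (rule ext) simp

lemma prefix_rev_permutes: "prefix_rev i permutes {0..<i}"
  unfolding permutes_def
proof (intro conjI allI impI)
  fix x assume "x \<notin> {0..<i}" then show "prefix_rev i x = x" by (simp add: prefix_rev_def)
next
  fix y show "\<exists>!x. prefix_rev i x = y"
  proof (rule ex1I[of _ "prefix_rev i y"])
    show "prefix_rev i (prefix_rev i y) = y" by simp
  next
    fix x assume "prefix_rev i x = y"
    then have "prefix_rev i (prefix_rev i x) = prefix_rev i y" by simp
    then show "x = prefix_rev i y" by simp
  qed
qed

lemma prefix_rev_perm: "permutation (prefix_rev i)"
  using prefix_rev_permutes permutation_permutes by blast

lemma r2: "prefix_rev 2 = transpose 0 1"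
  by (rule ext) (auto simp: prefix_rev_def transpose_def)
lemma r3: "prefix_rev 3 = transpose 0 2"
  by (rule ext) (auto simp: prefix_rev_def transpose_def)
lemma r4: "prefix_rev 4 = transpose 0 3 \<circ> transpose 1 2"
  by (rule ext) (auto simp: prefix_rev_def transpose_def)
lemma r5: "prefix_rev 5 = transpose 0 4 \<circ> transpose 1 3"
  by (rule ext) (auto simp: prefix_rev_def transpose_def)
lemma r6: "prefix_rev 6 = transpose 0 5 \<circ> transpose 1 4 \<circ> transpose 2 3"
  by (rule ext) (auto simp: prefix_rev_def transpose_def)
lemma r7: "prefix_rev 7 = transpose 0 6 \<circ> transpose 1 5 \<circ> transpose 2 4"
  by (rule ext) (auto simp: prefix_rev_def transpose_def)

lemma ev2: "\<not> evenperm (prefix_rev 2)" unfolding r2 by (simp add: evenperm_swap)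
lemma ev3: "\<not> evenperm (prefix_rev 3)" unfolding r3 by (simp add: evenperm_swap)
lemma ev4: "evenperm (prefix_rev 4)" unfolding r4
  by (simp add: evenperm_comp evenperm_swap permutation_swap_id)
lemma ev5: "evenperm (prefix_rev 5)" unfolding r5
  by (simp add: evenperm_comp evenperm_swap permutation_swap_id)
lemma ev6: "\<not> evenperm (prefix_rev 6)" unfolding r6
  by (simp add: evenperm_comp evenperm_swap permutation_swap_id permutation_compose)
lemma ev7: "\<not> evenperm (prefix_rev 7)" unfolding r7
  by (simp add: evenperm_comp evenperm_swap permutation_swap_id permutation_compose)

lemma ev_r: "evenperm (prefix_rev i) \<longleftrightarrow> (i = 4 \<or> i = 5)" if "2 \<le> i" "i \<le> 7"
proof -
  have "i = 2 \<or> i = 3 \<or> i = 4 \<or> i = 5 \<or> i = 6 \<or> i = 7" using that by arith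
  then show ?thesis using ev2 ev3 ev4 ev5 ev6 ev7 by (elim disjE) simp_all
qed

definition tbl :: "nat list list" where
  "tbl = [[0, 1, 2, 3, 4], [3, 2, 1, 0, 4], [4, 0, 1, 2, 3], [2, 1, 0, 4, 3], [3, 4, 0, 1, 2],
          [1, 0, 4, 3, 2], [2, 3, 4, 0, 1], [0, 4, 3, 2, 1], [1, 2, 3, 4, 0], [4, 3, 2, 1, 0]]"

definition gg :: "nat \<Rightarrow> nat \<Rightarrow> nat" where
  "gg k j = (if j < 5 then tbl ! k ! j else j)"

definition rr :: "nat \<Rightarrow> nat \<Rightarrow> nat" where
  "rr i = (if even i then prefix_rev 4 else prefix_rev 5)"

lemma lt10: "i < (10::nat) \<Longrightarrow> i = 0 \<or> i = 1 \<or> i = 2 \<or> i = 3 \<or> i = 4 \<or> i = 5 \<or> i = 6 \<or> i = 7 \<or> i = 8 \<or> i = 9"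
  by arith
lemma lt5: "i < (5::nat) \<Longrightarrow> i = 0 \<or> i = 1 \<or> i = 2 \<or> i = 3 \<or> i = 4"
  by arith

lemma gg_step_pt: "i < 10 \<Longrightarrow> x < 5 \<Longrightarrow> gg ((i + 1) mod 10) x = (gg i \<circ> rr i) x"
  apply (drule lt10, drule lt5)
  apply (elim disjE)
  apply (simp_all add: gg_def tbl_def rr_def prefix_rev_def)
  done

lemma gg_step: "i < 10 \<Longrightarrow> gg ((i + 1) mod 10) = gg i \<circ> rr i"
proof (rule ext)
  fix x assume i: "i < 10"
  show "gg ((i + 1) mod 10) x = (gg i \<circ> rr i) x"
  proof (cases "x < 5")
    case True
    then show ?thesis using gg_step_pt i by blast
  next
    case False
    then show ?thesis by (simp add: gg_def rr_def prefix_rev_def)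
  qed
qed

lemma rr_invol: "rr i \<circ> rr i = id"
  by (simp add: rr_def prefix_rev_o)

lemma gg_back: "i < 10 \<Longrightarrow> gg i = gg ((i + 1) mod 10) \<circ> rr i"
proof -
  assume i: "i < 10"
  have "gg ((i + 1) mod 10) \<circ> rr i = gg i \<circ> (rr i \<circ> rr i)"
    unfolding gg_step[OF i] by (simp add: comp_assoc)
  then show ?thesis by (simp add: rr_invol)
qed

lemma gg_inj0: "a < 10 \<Longrightarrow> b < 10 \<Longrightarrow> gg a 0 = gg b 0 \<Longrightarrow> gg a 1 = gg b 1 \<Longrightarrow> a = b"
  apply (drule lt10, drule lt10)
  apply (elim disjE)
  apply (simp_all add: gg_def tbl_def)
  done

lemma gg_inj: "a < 10 \<Longrightarrow> b < 10 \<Longrightarrow> gg a = gg b \<Longrightarrow> a = b"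
proof -
  assume a: "a < 10" and b: "b < 10" and e: "gg a = gg b"
  from e have "gg a 0 = gg b 0" "gg a 1 = gg b 1" by simp_all
  with a b show "a = b" by (rule gg_inj0)
qed

lemma gg0: "gg 0 = id"
  proof (rule ext)
  fix x show "gg 0 x = id x"
  proof (cases "x < 5")
    case True
    with lt5[OF True] show ?thesis by (elim disjE) (simp_all add: gg_def tbl_def)
  qed (simp add: gg_def)
qed

lemma gg_permutes: "i < 10 \<Longrightarrow> gg i permutes {0..<5} \<and> evenperm (gg i)"
proof (induction i)
  case 0
  then show ?case by (simp add: gg0 permutes_id[unfolded id_def])
next
  case (Suc i)
  then have i: "i < 10" by simp
  have gs: "gg (Suc i) = gg i \<circ> rr i" using gg_step[OF i] Suc.prems by simp
  have "rr i permutes {0..<5}"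
    unfolding rr_def using prefix_rev_permutes[of 4] prefix_rev_permutes[of 5]
      permutes_subset[of "prefix_rev 4" "{0..<4}" "{0..<5}"] by auto
  moreover have "evenperm (rr i)" "permutation (rr i)" unfolding rr_def
    using ev_r[of 4] ev_r[of 5] prefix_rev_perm by auto
  moreover have p1: "gg i permutes {0..<5}" and e1: "evenperm (gg i)" using Suc.IH i by auto
  moreover have "permutation (gg i)" using p1 permutation_permutes by blast
  ultimately have "gg i \<circ> rr i permutes {0..<5}" "evenperm (gg i \<circ> rr i)"
    using permutes_compose[of "rr i" "{0..<5}" "gg i"] evenperm_comp[of "gg i" "rr i"] by simp_all
  then show ?case unfolding gs by (simp add: comp_def)
qed


lemma V_def2: "\<sigma> \<in> sym_vertices n \<longleftrightarrow> \<sigma> permutes {0..<n}"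
  by (simp add: sym_vertices_def)

lemma V_perm: "\<sigma> \<in> sym_vertices n \<Longrightarrow> permutation \<sigma>"
  unfolding V_def2 using permutation_permutes by blast

lemma V_inj: "\<sigma> \<in> sym_vertices n \<Longrightarrow> inj \<sigma>"
  unfolding V_def2 by (rule permutes_inj)

lemma V_comp_r: "\<sigma> \<in> sym_vertices n \<Longrightarrow> i \<le> n \<Longrightarrow> \<sigma> \<circ> prefix_rev i \<in> sym_vertices n"
  unfolding V_def2
  by (rule permutes_compose[OF permutes_subset[OF prefix_rev_permutes]]) auto

lemma V_comp_g: "\<sigma> \<in> sym_vertices n \<Longrightarrow> 5 \<le> n \<Longrightarrow> k < 10 \<Longrightarrow> \<sigma> \<circ> gg k \<in> sym_vertices n"
  unfolding V_def2
  by (rule permutes_compose[OF permutes_subset]) (use gg_permutes in auto)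

lemma V_g_inj: "\<sigma> \<in> sym_vertices n \<Longrightarrow> a < 10 \<Longrightarrow> b < 10 \<Longrightarrow> \<sigma> \<circ> gg a = \<sigma> \<circ> gg b \<Longrightarrow> a = b"
proof -
  assume s: "\<sigma> \<in> sym_vertices n" and a: "a < 10" and b: "b < 10" and e: "\<sigma> \<circ> gg a = \<sigma> \<circ> gg b"
  have "gg a = gg b"
  proof
    fix x have "\<sigma> (gg a x) = \<sigma> (gg b x)" using e by (metis comp_apply)
    then show "gg a x = gg b x" using V_inj[OF s] by (simp add: inj_eq)
  qed
  then show "a = b" using gg_inj a b by blast
qed

lemma V_g_even: "\<sigma> \<in> sym_vertices n \<Longrightarrow> k < 10 \<Longrightarrow> evenperm (\<sigma> \<circ> gg k) = evenperm \<sigma>"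
proof -
  assume s: "\<sigma> \<in> sym_vertices n" and k: "k < 10"
  have "permutation (gg k)" using gg_permutes[OF k] permutation_permutes by blast
  then show ?thesis using evenperm_comp[OF V_perm[OF s]] gg_permutes[OF k] by simp
qed

definition cyc :: "(nat \<Rightarrow> nat) \<Rightarrow> (nat \<Rightarrow> nat) set" where
  "cyc \<sigma> = (\<lambda>k. \<sigma> \<circ> gg k) ` {..<10}"

lemma par9: "(j::nat) < 10 \<Longrightarrow> even ((j + 9) mod 10) \<longleftrightarrow> odd j"
  by (drule lt10) (elim disjE; simp)

lemma mod9: "(j::nat) < 10 \<Longrightarrow> ((j + 9) mod 10 + 1) mod 10 = j"
  by (drule lt10) (elim disjE; simp)

lemma r45_ne: "prefix_rev 4 \<noteq> prefix_rev 5"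
proof
  assume "prefix_rev 4 = prefix_rev 5"
  then have "prefix_rev 4 0 = prefix_rev 5 0" by simp
  then show False by (simp add: prefix_rev_def)
qed

lemma cyc_comp:
  assumes n: "5 \<le> n" and s: "\<sigma> \<in> sym_vertices n"
  shows "cycle_component (sym_vertices n) (rev_adj {4, 5}) 10 (cyc \<sigma>)"
  unfolding cycle_component_def
proof (intro exI conjI)
  let ?xs = "map (\<lambda>k. \<sigma> \<circ> gg k) [0..<10]"
  have nth: "\<And>i. i < 10 \<Longrightarrow> ?xs ! i = \<sigma> \<circ> gg i" by simp
  show "distinct ?xs"
    unfolding distinct_map by (simp, rule inj_onI) (use V_g_inj[OF s] in auto)
  show "set ?xs = cyc \<sigma>" by (auto simp: cyc_def)
  show "length ?xs = 10" by simp
  show "cyc \<sigma> \<subseteq> sym_vertices n" using V_comp_g[OF s n] by (auto simp: cyc_def)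
  show "\<forall>u\<in>cyc \<sigma>. \<forall>w\<in>sym_vertices n. rev_adj {4, 5} u w \<longleftrightarrow>
           (\<exists>j<10. (u = ?xs ! j \<and> w = ?xs ! ((j + 1) mod 10)) \<or>
                  (w = ?xs ! j \<and> u = ?xs ! ((j + 1) mod 10)))"
  proof (intro ballI)
    fix u w assume u: "u \<in> cyc \<sigma>" and w: "w \<in> sym_vertices n"
    then obtain j where j: "j < 10" and uj: "u = \<sigma> \<circ> gg j" by (auto simp: cyc_def)
    have rr45: "rr i = prefix_rev 4 \<or> rr i = prefix_rev 5" for i by (simp add: rr_def)
    show "rev_adj {4, 5} u w \<longleftrightarrow>
           (\<exists>i<10. (u = ?xs ! i \<and> w = ?xs ! ((i + 1) mod 10)) \<or>
                  (w = ?xs ! i \<and> u = ?xs ! ((i + 1) mod 10)))"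
    proof
      assume "rev_adj {4, 5} u w"
      then obtain m where m: "m = 4 \<or> m = 5" and wm: "w = u \<circ> prefix_rev m"
        by (auto simp: rev_adj_def)
      show "\<exists>i<10. (u = ?xs ! i \<and> w = ?xs ! ((i + 1) mod 10)) \<or>
                  (w = ?xs ! i \<and> u = ?xs ! ((i + 1) mod 10))"
      proof (cases "rr j = prefix_rev m")
        case True
        have "w = \<sigma> \<circ> gg ((j + 1) mod 10)"
          unfolding wm uj gg_step[OF j] True by (simp add: comp_assoc)
        then show ?thesis using j uj nth by (intro exI[of _ j]) auto
      next
        case False
        define i where "i = (j + 9) mod 10"
        have i: "i < 10" by (simp add: i_def)
        have ij: "(i + 1) mod 10 = j" using mod9[OF j] by (simp add: i_def)
        have "rr i = prefix_rev m" using False m par9[OF j] r45_ne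
          by (auto simp: rr_def i_def)
        then have "w = \<sigma> \<circ> gg i"
          unfolding wm uj gg_back[OF i] ij[symmetric]
          by (simp add: comp_assoc rr_invol[unfolded comp_def] comp_def)
        then show ?thesis using i ij uj nth[OF i] nth[OF j] by (intro exI[of _ i]) auto
      qed
    next
      assume "\<exists>i<10. (u = ?xs ! i \<and> w = ?xs ! ((i + 1) mod 10)) \<or>
                  (w = ?xs ! i \<and> u = ?xs ! ((i + 1) mod 10))"
      then obtain i where i: "i < 10" and
        h: "(u = \<sigma> \<circ> gg i \<and> w = \<sigma> \<circ> gg ((i + 1) mod 10)) \<or>
            (w = \<sigma> \<circ> gg i \<and> u = \<sigma> \<circ> gg ((i + 1) mod 10))"
        using nth by (metis mod_less_divisor zero_less_numeral)
      from h have "w = u \<circ> rr i"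
      proof
        assume "u = \<sigma> \<circ> gg i \<and> w = \<sigma> \<circ> gg ((i + 1) mod 10)"
        then show ?thesis unfolding gg_step[OF i] by (simp add: comp_assoc)
      next
        assume "w = \<sigma> \<circ> gg i \<and> u = \<sigma> \<circ> gg ((i + 1) mod 10)"
        then show ?thesis using gg_back[OF i] by (simp add: comp_assoc)
      qed
      then show "rev_adj {4, 5} u w" using rr45[of i] by (auto simp: rev_adj_def)
    qed
  qed
qed


lemma cc_sub:
  assumes C: "cycle_component V E k C" and D: "cycle_component V E k D"
    and x: "x \<in> C" "x \<in> D" and k: "0 < k"
  shows "C \<subseteq> D"
proof -
  obtain xs where xs: "distinct xs" "set xs = C" "length xs = k" "C \<subseteq> V"
    and hC: "\<forall>u\<in>C. \<forall>w\<in>V. E u w \<longleftrightarrow>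
           (\<exists>j<k. (u = xs ! j \<and> w = xs ! ((j + 1) mod k)) \<or>
                  (w = xs ! j \<and> u = xs ! ((j + 1) mod k)))"
    using C unfolding cycle_component_def by (elim exE conjE) (rule that, assumption+)
  obtain ys where ys: "distinct ys" "set ys = D" "length ys = k" "D \<subseteq> V"
    and hD: "\<forall>u\<in>D. \<forall>w\<in>V. E u w \<longleftrightarrow>
           (\<exists>j<k. (u = ys ! j \<and> w = ys ! ((j + 1) mod k)) \<or>
                  (w = ys ! j \<and> u = ys ! ((j + 1) mod k)))"
    using D unfolding cycle_component_def by (elim exE conjE) (rule that, assumption+)
  have closed: "w \<in> D" if "u \<in> D" "w \<in> V" "E u w" for u w
  proof -
    have "\<exists>j<k. (u = ys ! j \<and> w = ys ! ((j + 1) mod k)) \<or>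
                  (w = ys ! j \<and> u = ys ! ((j + 1) mod k))"
      using hD[rule_format, OF that(1,2)] that(3) by simp
    then obtain j where "j < k" "(u = ys ! j \<and> w = ys ! ((j + 1) mod k)) \<or>
                  (w = ys ! j \<and> u = ys ! ((j + 1) mod k))" by blast
    moreover have "(j + 1) mod k < k" "j < k" using k \<open>j < k\<close> by simp_all
    ultimately have "ys ! j \<in> D" "ys ! ((j + 1) mod k) \<in> D"
      using ys(2,3) nth_mem[of "(j+1) mod k" ys] nth_mem[of j ys] by auto
    then show ?thesis using \<open>(u = ys ! j \<and> w = ys ! ((j + 1) mod k)) \<or>
                  (w = ys ! j \<and> u = ys ! ((j + 1) mod k))\<close> by auto
  qed
  have edge: "E (xs ! j) (xs ! ((j + 1) mod k))" if "j < k" for j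
  proof -
    have jk: "(j + 1) mod k < k" using k by simp
    have "xs ! j \<in> C" "xs ! ((j + 1) mod k) \<in> V"
      using xs that nth_mem[of "(j+1) mod k" xs] nth_mem[of j xs] jk by auto
    note iff = hC[rule_format, OF this]
    show ?thesis unfolding iff using that by (intro exI[of _ j]) simp
  qed
  obtain j0 where j0: "j0 < k" "xs ! j0 = x" using x xs by (metis in_set_conv_nth)
  have walk: "xs ! ((j0 + m) mod k) \<in> D" for m
  proof (induction m)
    case 0 then show ?case using j0 x by simp
  next
    case (Suc m)
    have e: "(j0 + Suc m) mod k = ((j0 + m) mod k + 1) mod k" by (simp add: mod_Suc_eq)
    have "xs ! (((j0 + m) mod k + 1) mod k) \<in> V" using xs k by (auto simp: nth_mem)
    then show ?case unfolding e using closed[OF Suc.IH] edge k by auto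
  qed
  show "C \<subseteq> D"
  proof
    fix y assume "y \<in> C"
    then obtain i where i: "i < k" "y = xs ! i" using xs by (metis in_set_conv_nth)
    have "(j0 + (i + k - j0)) mod k = i" using i j0 by simp
    then show "y \<in> D" using walk[of "i + k - j0"] i by simp
  qed
qed

definition Dfun :: "(nat \<Rightarrow> nat) \<Rightarrow> nat" where
  "Dfun \<sigma> = of_bool (\<sigma> 1 < \<sigma> 0) + of_bool (\<sigma> 2 < \<sigma> 1) + of_bool (\<sigma> 3 < \<sigma> 2)
     + of_bool (\<sigma> 4 < \<sigma> 3) + of_bool (\<sigma> 0 < \<sigma> 4)"

definition col :: "(nat \<Rightarrow> nat) \<Rightarrow> nat" where
  "col \<sigma> = (if evenperm \<sigma> then 0 else 2) + Dfun \<sigma> mod 2"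

lemma ob: "(x::nat) \<noteq> y \<Longrightarrow> of_bool (x < y) + of_bool (y < x) = (1::nat)"
  by auto

lemma Dflip:
  assumes "inj \<sigma>" "m = 4 \<or> m = 5"
  shows "Dfun (\<sigma> \<circ> prefix_rev m) + Dfun \<sigma> = 5"
proof -
  have "\<sigma> 0 \<noteq> \<sigma> 1" "\<sigma> 1 \<noteq> \<sigma> 2" "\<sigma> 2 \<noteq> \<sigma> 3" "\<sigma> 3 \<noteq> \<sigma> 4" "\<sigma> 4 \<noteq> \<sigma> 0"
    using assms(1) by (simp_all add: inj_eq)
  note o = ob[OF this(1)] ob[OF this(2)] ob[OF this(3)] ob[OF this(4)] ob[OF this(5)]
  from assms(2) show ?thesis
  proof
    assume "m = 4" then show ?thesis using o by (simp add: Dfun_def prefix_rev_def)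
  next
    assume "m = 5" then show ?thesis using o by (simp add: Dfun_def prefix_rev_def)
  qed
qed

lemma aux5: "(a::nat) + b = 5 \<Longrightarrow> (b mod 2 = 0 \<and> a mod 2 = 1) \<or> (b mod 2 = 1 \<and> a mod 2 = 0)"
  by presburger

definition flip :: "nat \<Rightarrow> nat" where "flip a = (if even a then a + 1 else a - 1)"

lemma col45:
  assumes s: "\<sigma> \<in> sym_vertices n" and m: "m = 4 \<or> m = 5"
  shows "col (\<sigma> \<circ> prefix_rev m) = flip (col \<sigma>)"
proof -
  have "evenperm (\<sigma> \<circ> prefix_rev m) = evenperm \<sigma>"
    using evenperm_comp[OF V_perm[OF s] prefix_rev_perm] ev4 ev5 m by auto
  moreover have "Dfun (\<sigma> \<circ> prefix_rev m) + Dfun \<sigma> = 5" using Dflip[OF V_inj[OF s] m] .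
  moreover have "(Dfun \<sigma> mod 2 = 0 \<and> Dfun (\<sigma> \<circ> prefix_rev m) mod 2 = 1) \<or>
      (Dfun \<sigma> mod 2 = 1 \<and> Dfun (\<sigma> \<circ> prefix_rev m) mod 2 = 0)"
    using calculation(2) aux5 by blast
  ultimately show ?thesis unfolding col_def flip_def by auto
qed

lemma col_other:
  assumes s: "\<sigma> \<in> sym_vertices n" and i: "2 \<le> i" "i \<le> 7" "i \<noteq> 4" "i \<noteq> 5"
  shows "col (\<sigma> \<circ> prefix_rev i) < 2 \<longleftrightarrow> \<not> col \<sigma> < 2"
proof -
  have "evenperm (\<sigma> \<circ> prefix_rev i) = (\<not> evenperm \<sigma>)"
    using evenperm_comp[OF V_perm[OF s] prefix_rev_perm] ev_r[OF i(1,2)] i by auto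
  then show ?thesis unfolding col_def by auto
qed

lemma col_lt2: "col \<sigma> < 2 \<longleftrightarrow> evenperm \<sigma>"
  unfolding col_def by auto

lemma col_lt4: "col \<sigma> < 4"
  unfolding col_def by auto

lemma swap_card:
  assumes "finite A" "finite B" "inj f" "f ` A \<subseteq> B" "f ` B \<subseteq> A"
  shows "card A = card B"
proof -
  have i: "inj_on f X" for X using assms(3) inj_on_subset by blast
  have "card A \<le> card B" by (rule card_inj_on_le[OF i assms(4) assms(2)])
  moreover have "card B \<le> card A" by (rule card_inj_on_le[OF i assms(5) assms(1)])
  ultimately show ?thesis by simp
qed

lemma inj_r: "inj (\<lambda>\<sigma>::nat\<Rightarrow>nat. \<sigma> \<circ> prefix_rev m)"
proof (rule injI)
  fix x y assume "x \<circ> prefix_rev m = y \<circ> prefix_rev m"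
  then have "x \<circ> prefix_rev m \<circ> prefix_rev m = y \<circ> prefix_rev m \<circ> prefix_rev m" by simp
  then show "x = y" by (simp add: comp_assoc prefix_rev_o)
qed


lemma flip_ne: "flip a \<noteq> a"
  by (simp add: flip_def) presburger

theorem mainTheorem6:
  fixes n :: nat
  assumes "n \<in> {5, 6, 7}"
  shows "(\<exists>\<C>. \<Union>\<C> = sym_vertices n \<and>
            (\<forall>C\<in>\<C>. \<forall>D\<in>\<C>. C \<noteq> D \<longrightarrow> C \<inter> D = {}) \<and>
            (\<forall>C\<in>\<C>. cycle_component (sym_vertices n) (rev_adj {4, 5}) 10 C) \<and>
            (\<forall>C\<in>\<C>. \<forall>\<sigma>\<in>C. \<forall>\<tau>\<in>C. evenperm \<sigma> = evenperm \<tau>))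
       \<and> (\<exists>c. proper_coloring (sym_vertices n) (pancake_adj n) 4 c \<and>
            equitable (sym_vertices n) 4 c \<and>
            (\<forall>a<4. card {\<sigma>\<in>sym_vertices n. c \<sigma> = a} = fact n div 4) \<and>
            (\<forall>\<sigma>\<in>sym_vertices n. c \<sigma> < 2 \<longleftrightarrow> evenperm \<sigma>) \<and>
            proper_coloring (sym_vertices n) (rev_adj {4, 5}) 4 c)"
proof -
  have n5: "5 \<le> n" and n7: "n \<le> 7" using assms by auto
  define V where "V = sym_vertices n"
  have part1: "\<exists>\<C>. \<Union>\<C> = V \<and>
            (\<forall>C\<in>\<C>. \<forall>D\<in>\<C>. C \<noteq> D \<longrightarrow> C \<inter> D = {}) \<and>
            (\<forall>C\<in>\<C>. cycle_component V (rev_adj {4, 5}) 10 C) \<and>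
            (\<forall>C\<in>\<C>. \<forall>\<sigma>\<in>C. \<forall>\<tau>\<in>C. evenperm \<sigma> = evenperm \<tau>)"
  proof (intro exI[of _ "cyc ` V"] conjI)
    show "\<Union> (cyc ` V) = V"
    proof
      show "\<Union> (cyc ` V) \<subseteq> V" using V_comp_g[OF _ n5] by (auto simp: cyc_def V_def)
      show "V \<subseteq> \<Union> (cyc ` V)"
      proof
        fix \<sigma> assume "\<sigma> \<in> V"
        moreover have "\<sigma> \<in> cyc \<sigma>" unfolding cyc_def
          by (rule image_eqI[of _ _ 0]) (simp_all add: gg0)
        ultimately show "\<sigma> \<in> \<Union> (cyc ` V)" by blast
      qed
    qed
    show cc: "\<forall>C\<in>cyc ` V. cycle_component V (rev_adj {4, 5}) 10 C"
      using cyc_comp[OF n5] by (auto simp: V_def)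
    show "\<forall>C\<in>cyc ` V. \<forall>D\<in>cyc ` V. C \<noteq> D \<longrightarrow> C \<inter> D = {}"
    proof (intro ballI impI)
      fix C D assume C: "C \<in> cyc ` V" and D: "D \<in> cyc ` V" and ne: "C \<noteq> D"
      show "C \<inter> D = {}"
      proof (rule ccontr)
        assume "C \<inter> D \<noteq> {}"
        then obtain x where x: "x \<in> C" "x \<in> D" by blast
        have "C \<subseteq> D" using cc_sub[of V "rev_adj {4, 5}" 10 C D x] cc C D x by simp
        moreover have "D \<subseteq> C" using cc_sub[of V "rev_adj {4, 5}" 10 D C x] cc C D x by simp
        ultimately show False using ne by blast
      qed
    qed
    show "\<forall>C\<in>cyc ` V. \<forall>\<sigma>\<in>C. \<forall>\<tau>\<in>C. evenperm \<sigma> = evenperm \<tau>"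
      using V_g_even by (auto simp: cyc_def V_def)
  qed
  have propr: "proper_coloring V (pancake_adj n) 4 col"
    unfolding proper_coloring_def
  proof (intro conjI ballI impI)
    fix v show "col v < 4" by (rule col_lt4)
  next
    fix u v assume u: "u \<in> V" and v: "v \<in> V" and e: "pancake_adj n u v"
    then obtain i where i: "2 \<le> i" "i \<le> n" and vi: "v = u \<circ> prefix_rev i"
      by (auto simp: pancake_adj_def rev_adj_def)
    show "col u \<noteq> col v"
    proof (cases "i = 4 \<or> i = 5")
      case True
      then show ?thesis using col45[of u n i] u vi flip_ne by (metis V_def)
    next
      case False
      then show ?thesis using col_other[of u n i] u vi i n7 by (auto simp: V_def)
    qed
  qed
  have propr45: "proper_coloring V (rev_adj {4, 5}) 4 col"
    using propr n5 unfolding proper_coloring_def pancake_adj_def rev_adj_def by force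
  define A where "A a = {\<sigma>\<in>V. col \<sigma> = a}" for a
  have finV: "finite V" unfolding V_def sym_vertices_def by (rule finite_permutations) simp
  have cardV: "card V = fact n" unfolding V_def sym_vertices_def
    by (rule card_permutations) simp_all
  have finA: "finite (A a)" for a using finV by (simp add: A_def)
  have r4V: "\<sigma> \<circ> prefix_rev 4 \<in> V" if "\<sigma> \<in> V" for \<sigma>
    using V_comp_r[of \<sigma> n 4] that n5 by (simp add: V_def)
  have r2V: "\<sigma> \<circ> prefix_rev 2 \<in> V" if "\<sigma> \<in> V" for \<sigma>
    using V_comp_r[of \<sigma> n 2] that n5 by (simp add: V_def)
  have c4: "col (\<sigma> \<circ> prefix_rev 4) = flip (col \<sigma>)" if "\<sigma> \<in> V" for \<sigma>
    using col45[of \<sigma> n 4] that by (simp add: V_def)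
  have AA: "card (A a) = card (A (flip a))" for a
  proof (rule swap_card[OF finA finA inj_r[of 4]])
    show "(\<lambda>\<sigma>. \<sigma> \<circ> prefix_rev 4) ` A a \<subseteq> A (flip a)"
      using r4V c4 by (auto simp: A_def)
    have ff: "flip (flip a) = a" by (simp add: flip_def)
    show "(\<lambda>\<sigma>. \<sigma> \<circ> prefix_rev 4) ` A (flip a) \<subseteq> A a"
      using r4V c4 ff by (auto simp: A_def)
  qed
  have A01: "card (A 0) = card (A 1)" using AA[of 0] by (simp add: flip_def)
  have A23: "card (A 2) = card (A 3)" using AA[of 2] by (simp add: flip_def)
  define E where "E = {\<sigma>\<in>V. col \<sigma> < 2}"
  define Od where "Od = {\<sigma>\<in>V. \<not> col \<sigma> < 2}"
  have c2: "col (\<sigma> \<circ> prefix_rev 2) < 2 \<longleftrightarrow> \<not> col \<sigma> < 2" if "\<sigma> \<in> V" for \<sigma>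
    using col_other[of \<sigma> n 2] that by (simp add: V_def)
  have EO: "card E = card Od"
    by (rule swap_card[OF _ _ inj_r[of 2]]) (use finV r2V c2 in \<open>auto simp: E_def Od_def\<close>)
  have E01: "E = A 0 \<union> A 1" by (auto simp: E_def A_def)
  have O23: "Od = A 2 \<union> A 3"
  proof -
    have "\<not> col x < 2 \<longleftrightarrow> col x = 2 \<or> col x = 3" for x using col_lt4[of x] by arith
    then show ?thesis by (auto simp: Od_def A_def)
  qed
  have VEO: "V = E \<union> Od" by (auto simp: E_def Od_def)
  have "card E = card (A 0) + card (A 1)" unfolding E01
    by (rule card_Un_disjoint[OF finA finA]) (auto simp: A_def)
  moreover have "card Od = card (A 2) + card (A 3)" unfolding O23
    by (rule card_Un_disjoint[OF finA finA]) (auto simp: A_def)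
  moreover have "card V = card E + card Od" unfolding VEO
    by (rule card_Un_disjoint) (use finV in \<open>auto simp: E_def Od_def\<close>)
  ultimately have four: "4 * card (A 0) = fact n" using A01 A23 EO cardV by simp
  have cardA: "card (A a) = fact n div 4" if "a < 4" for a
  proof -
    have "a = 0 \<or> a = 1 \<or> a = 2 \<or> a = 3" using that by arith
    then have "card (A a) = card (A 0)" using A01 A23 EO \<open>card E = card (A 0) + card (A 1)\<close>
      \<open>card Od = card (A 2) + card (A 3)\<close> by auto
    then show ?thesis using four by simp
  qed
  have part2: "\<exists>c. proper_coloring V (pancake_adj n) 4 c \<and>
            equitable V 4 c \<and>
            (\<forall>a<4. card {\<sigma>\<in>V. c \<sigma> = a} = fact n div 4) \<and>
            (\<forall>\<sigma>\<in>V. c \<sigma> < 2 \<longleftrightarrow> evenperm \<sigma>) \<and>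
            proper_coloring V (rev_adj {4, 5}) 4 c"
  proof (intro exI[of _ col] conjI)
    show "proper_coloring V (pancake_adj n) 4 col" by (rule propr)
    show "equitable V 4 col" unfolding equitable_def using cardA by (simp add: A_def)
    show "\<forall>a<4. card {\<sigma>\<in>V. col \<sigma> = a} = fact n div 4" using cardA by (simp add: A_def)
    show "\<forall>\<sigma>\<in>V. col \<sigma> < 2 \<longleftrightarrow> evenperm \<sigma>" by (simp add: col_lt2)
    show "proper_coloring V (rev_adj {4, 5}) 4 col" by (rule propr45)
  qed
  show ?thesis unfolding V_def[symmetric] using part1 part2 by (rule conjI)
qed

end
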